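(* Let $\mathbb G$ be a homogeneous Lie group, $\delta>0$ and $P\in\bar{\operatorname T}_{<\delta}$. If for some $\varepsilon\in[0,1]$ one has $|(X^I\Pi_eP)(e)|\le\varepsilon^{\delta-d(I)}$ for all multi-indices $I\in\mathbb N^d$ with $d(I)<\delta$, then $|P|_a\lesssim_{\delta,\mathbb G}\varepsilon^{\delta-a}$ for all $a\le\delta$.
   Context: $\mathbb{G}$ is a connected, simply connected Lie group with Lie algebra $\mathfrak g$ (identified with left-invariant vector fields) equipped with dilations $D_r=\exp(\log r\,\mathfrak s)$ (Lie algebra automorphisms, $\mathfrak s$ diagonalisable with smallest eigenvalue $1$); basis $X_1,\dots,X_d$ with $\mathfrak sX_j=\mathfrak s_jX_j$; coordinates $\eta_j=\zeta_j\circ\exp^{-1}$ ($\zeta_j$ the dual basis); for $I\in\mathbb N^d$, $\eta^I=\prod\eta_j^{i_j}$, $d(I)=\sum\mathfrak s_ji_j$, $X^I=X_1^{i_1}\cdots X_d^{i_d}$. $\bar{\operatorname T}$ is the vector space with basis the abstract monomials $\pmb\eta^I$, $I\in\mathbb N^d$, graded by $\bar{\operatorname T}_a=\mathrm{span}\{\pmb\eta^I:d(I)=a\}$, each $\bar{\operatorname T}_a$ equipped with a fixed norm; for $P\in\bar{\operatorname T}$, $|P|_a$ is the norm of its $\bar{\operatorname T}_a$-component, and $\bar{\operatorname T}_{<\delta}=\bigoplus_{a<\delta}\bar{\operatorname T}_a$. $\Pi_e$ is the linear map sending $\pmb\eta^I$ to the function $\eta^I$ on $\mathbb G$. *)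

theory Defs
  imports "HOL-Analysis.Analysis"
begin

fun Ck :: "nat \<Rightarrow> ('a::euclidean_space \<Rightarrow> real) \<Rightarrow> bool" where
  "Ck 0 f = continuous_on UNIV f"
| "Ck (Suc k) f = (f differentiable_on UNIV \<and>
      (\<forall>v. Ck k (\<lambda>x. frechet_derivative f (at x) v)))"

definition smooth_fun :: "('a::euclidean_space \<Rightarrow> real) \<Rightarrow> bool" where
  "smooth_fun f \<longleftrightarrow> (\<forall>k. Ck k f)"

text \<open>The group is modelled on R^d in exponential coordinates: the point x
  is exp(sum_j x_j X_j).  Left-invariant vector field X_j:\<close>
definition lvf :: "((real, 'n::finite) vec \<Rightarrow> (real, 'n) vec \<Rightarrow> (real, 'n) vec) \<Rightarrow> 'n \<Rightarrow>
    ((real, 'n) vec \<Rightarrow> real) \<Rightarrow> (real, 'n) vec \<Rightarrow> real" where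
  "lvf mul j f x = deriv (\<lambda>t. f (mul x (t *\<^sub>R axis j 1))) 0"

definition XI :: "((real, 'n::{finite,linorder}) vec \<Rightarrow> (real, 'n) vec \<Rightarrow> (real, 'n) vec) \<Rightarrow> ('n \<Rightarrow> nat) \<Rightarrow>
    ((real, 'n) vec \<Rightarrow> real) \<Rightarrow> (real, 'n) vec \<Rightarrow> real" where
  "XI mul I f = foldr (\<lambda>j g. (lvf mul j ^^ I j) g) (sorted_list_of_set UNIV) f"

definition hdeg :: "('n::finite \<Rightarrow> real) \<Rightarrow> ('n \<Rightarrow> nat) \<Rightarrow> real" where
  "hdeg s I = (\<Sum>j\<in>UNIV. s j * real (I j))"

text \<open>Coordinate monomial eta^I and the realisation map Pi_e (abstract
  polynomials are coefficient functions on multi-indices).\<close>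
definition eta_mono :: "('n::finite \<Rightarrow> nat) \<Rightarrow> (real, 'n) vec \<Rightarrow> real" where
  "eta_mono I x = (\<Prod>j\<in>UNIV. (x $ j) ^ I j)"

definition Pi_e :: "(('n::finite \<Rightarrow> nat) \<Rightarrow> real) \<Rightarrow> (real, 'n) vec \<Rightarrow> real" where
  "Pi_e c x = (\<Sum>I\<in>{I. c I \<noteq> 0}. c I * eta_mono I x)"

definition hcomp :: "('n::finite \<Rightarrow> real) \<Rightarrow> (('n \<Rightarrow> nat) \<Rightarrow> real) \<Rightarrow> real \<Rightarrow> (('n \<Rightarrow> nat) \<Rightarrow> real)" where
  "hcomp s c a = (\<lambda>I. if hdeg s I = a then c I else 0)"

definition grade_space :: "('n::finite \<Rightarrow> real) \<Rightarrow> real \<Rightarrow> (('n \<Rightarrow> nat) \<Rightarrow> real) set" where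
  "grade_space s a = {c. \<forall>I. hdeg s I \<noteq> a \<longrightarrow> c I = 0}"

definition norm_on :: "('b \<Rightarrow> real) set \<Rightarrow> (('b \<Rightarrow> real) \<Rightarrow> real) \<Rightarrow> bool" where
  "norm_on V N \<longleftrightarrow>
     (\<forall>c\<in>V. N c \<ge> 0 \<and> (N c = 0 \<longrightarrow> c = (\<lambda>_. 0))) \<and>
     (\<forall>c\<in>V. \<forall>r. N (\<lambda>I. r * c I) = \<bar>r\<bar> * N c) \<and>
     (\<forall>c\<in>V. \<forall>c'\<in>V. N (\<lambda>I. c I + c' I) \<le> N c + N c')"

definition dil :: "('n::finite \<Rightarrow> real) \<Rightarrow> real \<Rightarrow> (real, 'n) vec \<Rightarrow> (real, 'n) vec" where
  "dil s r x = (\<chi> j. r powr s j * x $ j)"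

end

theory Submission
  imports Defs
begin

lemma Ck_mono: "Ck (Suc k) f \<Longrightarrow> Ck k f"
proof (induction k arbitrary: f)
  case 0
  then show ?case by (auto intro: differentiable_imp_continuous_on)
next
  case (Suc k)
  then show ?case by auto
qed

lemma Ck_diff: "Ck (Suc k) f \<Longrightarrow> (f has_derivative frechet_derivative f (at x)) (at x)"
  by (auto simp: differentiable_on_def frechet_derivative_works[symmetric])

lemma Ck_const: "Ck k (\<lambda>_. c)"
proof (induction k arbitrary: c)
  case 0 then show ?case by simp
next
  case (Suc k)
  have "frechet_derivative (\<lambda>_. c) (at x) = (\<lambda>_. 0)" for x
    using frechet_derivative_at[OF has_derivative_const] by metis
  then show ?case using Suc by simp
qed

lemma Ck_linear: "bounded_linear L \<Longrightarrow> Ck k (L::'a::euclidean_space \<Rightarrow> real)"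
proof (cases k)
  case 0
  assume "bounded_linear L" then show ?thesis using 0 by (simp add: linear_continuous_on)
next
  case (Suc k')
  assume L: "bounded_linear L"
  have "frechet_derivative L (at x) = L" for x
    using frechet_derivative_at[OF bounded_linear.has_derivative[OF L has_derivative_ident]] by simp
  moreover have "L differentiable_on UNIV"
    using L by (simp add: differentiable_on_def bounded_linear_imp_differentiable)
  ultimately show ?thesis using Suc by (simp add: Ck_const)
qed

lemma Ck_add: "Ck k f \<Longrightarrow> Ck k g \<Longrightarrow> Ck k (\<lambda>x. f x + g x)"
proof (induction k arbitrary: f g)
  case 0 then show ?case by (auto intro: continuous_on_add)
next
  case (Suc k)
  have "frechet_derivative (\<lambda>x. f x + g x) (at x) = (\<lambda>v. frechet_derivative f (at x) v + frechet_derivative g (at x) v)" for x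
    using frechet_derivative_at[OF has_derivative_add[OF Ck_diff[OF Suc.prems(1)] Ck_diff[OF Suc.prems(2)]]] by simp
  moreover have "(\<lambda>x. f x + g x) differentiable_on UNIV"
    using Suc.prems by (auto intro: differentiable_on_add)
  ultimately show ?case using Suc by simp
qed

lemma Ck_mult: "Ck k f \<Longrightarrow> Ck k g \<Longrightarrow> Ck k (\<lambda>x. f x * g x :: real)"
proof (induction k arbitrary: f g)
  case 0 then show ?case by (auto intro: continuous_on_mult)
next
  case (Suc k)
  have "frechet_derivative (\<lambda>x. f x * g x) (at x) = (\<lambda>v. f x * frechet_derivative g (at x) v + frechet_derivative f (at x) v * g x)" for x
    using frechet_derivative_at[OF has_derivative_mult[OF Ck_diff[OF Suc.prems(1)] Ck_diff[OF Suc.prems(2)]]] by simp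
  moreover have "(\<lambda>x. f x * g x) differentiable_on UNIV"
    using Suc.prems by (auto intro: differentiable_on_mult)
  moreover have "Ck k f" "Ck k g" using Suc.prems Ck_mono by blast+
  ultimately show ?case using Suc by (simp add: Ck_add)
qed

lemma Ck_sum: "finite A \<Longrightarrow> (\<And>i. i \<in> A \<Longrightarrow> Ck k (f i)) \<Longrightarrow> Ck k (\<lambda>x. \<Sum>i\<in>A. f i x)"
  by (induction A rule: finite_induct) (auto simp: Ck_const Ck_add)

lemma Ck_prod: "finite A \<Longrightarrow> (\<And>i. i \<in> A \<Longrightarrow> Ck k (f i)) \<Longrightarrow> Ck k (\<lambda>x. \<Prod>i\<in>A. f i x :: real)"
  by (induction A rule: finite_induct) (auto simp: Ck_const Ck_mult)

lemma Ck_power: "Ck k f \<Longrightarrow> Ck k (\<lambda>x. f x ^ n :: real)"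
  by (induction n) (auto simp: Ck_const Ck_mult)

lemma Ck_comp:
  fixes F :: "'a::euclidean_space \<Rightarrow> 'b::euclidean_space" and g :: "'b \<Rightarrow> real"
  shows "Ck k g \<Longrightarrow> (\<And>b. b \<in> Basis \<Longrightarrow> Ck k (\<lambda>x. F x \<bullet> b)) \<Longrightarrow> Ck k (\<lambda>x. g (F x))"
proof (induction k arbitrary: g F)
  case 0
  have "continuous_on UNIV F"
    using 0 by (subst continuous_on_componentwise) auto
  then show ?case using 0 by (auto intro: continuous_on_compose2)
next
  case (Suc k)
  define F' where "F' x v = (\<Sum>b\<in>Basis. frechet_derivative (\<lambda>x. F x \<bullet> b) (at x) v *\<^sub>R b)" for x v
  have dF: "(F has_derivative F' x) (at x)" for x
  proof -
    have "((\<lambda>x. F x \<bullet> b) has_derivative (\<lambda>v. F' x v \<bullet> b)) (at x)" if b: "b \<in> Basis" for b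
    proof -
      have "F' x v \<bullet> b = frechet_derivative (\<lambda>x. F x \<bullet> b) (at x) v" for v
        using b by (simp add: F'_def inner_sum_left inner_Basis if_distrib cong: if_cong)
      then show ?thesis using Ck_diff[OF Suc.prems(2)[OF b]] by simp
    qed
    then show ?thesis by (subst has_derivative_componentwise_within) auto
  qed
  have dg: "(g has_derivative frechet_derivative g (at y)) (at y)" for y
    using Ck_diff[OF Suc.prems(1)] .
  have "((\<lambda>x. g (F x)) has_derivative (\<lambda>v. frechet_derivative g (at (F x)) (F' x v))) (at x)" for x
    using has_derivative_compose[OF dF dg] by (simp add: o_def)
  then have fd: "frechet_derivative (\<lambda>x. g (F x)) (at x) v =
     (\<Sum>b\<in>Basis. frechet_derivative (\<lambda>x. F x \<bullet> b) (at x) v * frechet_derivative g (at (F x)) b)" for x v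
  proof -
    assume h: "\<And>x. ((\<lambda>x. g (F x)) has_derivative (\<lambda>v. frechet_derivative g (at (F x)) (F' x v))) (at x)"
    have lin: "linear (frechet_derivative g (at (F x)))"
      using dg has_derivative_linear by blast
    have "frechet_derivative (\<lambda>x. g (F x)) (at x) v = frechet_derivative g (at (F x)) (F' x v)"
      using frechet_derivative_at[OF h[of x]] by metis
    also have "\<dots> = (\<Sum>b\<in>Basis. frechet_derivative (\<lambda>x. F x \<bullet> b) (at x) v * frechet_derivative g (at (F x)) b)"
      unfolding F'_def using lin by (simp add: linear_sum linear_scale)
    finally show ?thesis .
  qed
  have diff: "(\<lambda>x. g (F x)) differentiable_on UNIV"
    using \<open>\<And>x. ((\<lambda>x. g (F x)) has_derivative _) (at x)\<close>
    by (auto simp: differentiable_on_def differentiable_def)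
  have "Ck k (\<lambda>x. frechet_derivative (\<lambda>x. g (F x)) (at x) v)" for v
  proof -
    have "Ck k (\<lambda>x. frechet_derivative (\<lambda>x. F x \<bullet> b) (at x) v * frechet_derivative g (at (F x)) b)"
      if b: "b \<in> Basis" for b
    proof (rule Ck_mult)
      show "Ck k (\<lambda>x. frechet_derivative (\<lambda>x. F x \<bullet> b) (at x) v)" using Suc.prems(2)[OF b] by simp
      show "Ck k (\<lambda>x. frechet_derivative g (at (F x)) b)"
      proof (rule Suc.IH)
        show "Ck k (\<lambda>y. frechet_derivative g (at y) b)" using Suc.prems(1) by simp
        show "Ck k (\<lambda>x. F x \<bullet> c)" if "c \<in> Basis" for c using Suc.prems(2)[OF that] Ck_mono by blast
      qed
    qed
    then show ?thesis unfolding fd by (intro Ck_sum) auto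
  qed
  then show ?case using diff by simp
qed

lemma Ck_comp_blin:
  fixes F :: "'a::euclidean_space \<Rightarrow> 'b::euclidean_space" and g :: "'b \<Rightarrow> real"
  shows "Ck k g \<Longrightarrow> bounded_linear F \<Longrightarrow> Ck k (\<lambda>x. g (F x))"
  by (rule Ck_comp) (auto intro!: Ck_linear bounded_linear_compose[OF bounded_linear_inner_left])

lemma smooth_comp_blin:
  fixes F :: "'a::euclidean_space \<Rightarrow> 'b::euclidean_space"
  shows "smooth_fun g \<Longrightarrow> bounded_linear F \<Longrightarrow> smooth_fun (\<lambda>x. g (F x))"
  unfolding smooth_fun_def using Ck_comp_blin by blast

lemma vec_Basis_inner:
  fixes b :: "(real, 'n::finite) vec"
  assumes "b \<in> Basis" shows "\<exists>i. \<forall>x. x \<bullet> b = x $ i"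
  using assms by (auto simp: Basis_vec_def inner_axis)

context
  fixes mul :: "(real, 'n::{finite,linorder}) vec \<Rightarrow> (real, 'n) vec \<Rightarrow> (real, 'n) vec"
  assumes smoothm: "\<forall>i. smooth_fun (\<lambda>p::(real, 'n) vec \<times> (real, 'n) vec. mul (fst p) (snd p) $ i)"
  and unitm: "\<forall>x. mul 0 x = x \<and> mul x 0 = x"
begin

lemma smooth_mul_comp:
  fixes f :: "(real, 'n) vec \<Rightarrow> real"
  assumes "smooth_fun f"
  shows "smooth_fun (\<lambda>p. f (mul (fst p) (snd p)))"
  unfolding smooth_fun_def
proof
  fix k
  show "Ck k (\<lambda>p::(real, 'n) vec \<times> (real, 'n) vec. f (mul (fst p) (snd p)))"
  proof (rule Ck_comp[where g=f and F="\<lambda>p. mul (fst p) (snd p)"])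
    show "Ck k f" using assms smooth_fun_def by blast
    fix b :: "(real, 'n) vec" assume "b \<in> Basis"
    then obtain i where "\<And>x. x \<bullet> b = x $ i" using vec_Basis_inner by blast
    moreover have "Ck k (\<lambda>p. mul (fst p) (snd p) $ i)" using smoothm unfolding smooth_fun_def by blast
    ultimately show "Ck k (\<lambda>p. mul (fst p) (snd p) \<bullet> b)" by simp
  qed
qed

lemma lvf_deriv_gen:
  assumes "smooth_fun f"
  defines "G \<equiv> (\<lambda>p. f (mul (fst p) (snd p)))"
  shows "((\<lambda>t. f (mul x (t *\<^sub>R axis j 1))) has_real_derivative
          frechet_derivative G (at (x,0)) (0, axis j 1)) (at 0)"
proof -
  define D where "D = frechet_derivative G (at (x, 0))"
  have dG: "(G has_derivative D) (at (x,0))"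
    using smooth_mul_comp[OF assms(1)] unfolding G_def D_def smooth_fun_def
    using Ck_diff by blast
  have bl: "bounded_linear (\<lambda>t::real. t *\<^sub>R axis j (1::real))"
    by (rule bounded_linear_scaleR_left)
  have dg: "((\<lambda>t::real. (x, t *\<^sub>R axis j (1::real))) has_derivative (\<lambda>t. (0, t *\<^sub>R axis j 1))) (at 0)"
    by (rule has_derivative_Pair[OF has_derivative_const bounded_linear_imp_has_derivative[OF bl]])
  have e: "(\<lambda>t::real. (x, t *\<^sub>R axis j (1::real))) 0 = (x, 0)" by simp
  have dG': "(G has_derivative D) (at ((\<lambda>t::real. (x, t *\<^sub>R axis j (1::real))) 0))"
    unfolding e by (rule dG)
  have c: "((\<lambda>t. G (x, t *\<^sub>R axis j 1)) has_derivative (\<lambda>t. D (0, t *\<^sub>R axis j 1))) (at 0)"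
    using has_derivative_compose[OF dg dG'] unfolding o_def .
  have lin: "linear D" using dG has_derivative_linear by blast
  have "D (0, t *\<^sub>R axis j 1) = t * D (0, axis j 1)" for t
  proof -
    have "(0::(real, 'n) vec, t *\<^sub>R axis j 1) = t *\<^sub>R (0, axis j 1)" by simp
    then show ?thesis using linear_scale[OF lin, of t "(0, axis j 1)"] by simp
  qed
  then have "(\<lambda>t. D (0, t *\<^sub>R axis j 1)) = (\<lambda>t. D (0, axis j 1) * t)" by (auto simp: mult.commute)
  then have "((\<lambda>t. G (x, t *\<^sub>R axis j 1)) has_derivative (\<lambda>t. D (0, axis j 1) * t)) (at 0)"
    using c by simp
  then show ?thesis unfolding G_def has_field_derivative_def D_def by simp
qed

lemma lvf_eq:
  assumes "smooth_fun f"
  shows "lvf mul j f = (\<lambda>x. frechet_derivative (\<lambda>p. f (mul (fst p) (snd p))) (at (x,0)) (0, axis j 1))"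
  unfolding lvf_def using lvf_deriv_gen[OF assms] DERIV_imp_deriv by blast

lemma lvf_deriv:
  assumes "smooth_fun f"
  shows "((\<lambda>t. f (mul x (t *\<^sub>R axis j 1))) has_real_derivative lvf mul j f x) (at 0)"
  using lvf_deriv_gen[OF assms] lvf_eq[OF assms] by simp

lemma lvf_smooth:
  assumes "smooth_fun f"
  shows "smooth_fun (lvf mul j f)"
proof -
  define H where "H = (\<lambda>p. frechet_derivative (\<lambda>p. f (mul (fst p) (snd p))) (at p) (0::(real,'n) vec, axis j (1::real)))"
  have "smooth_fun H"
    unfolding smooth_fun_def H_def
  proof
    fix k
    have "Ck (Suc k) (\<lambda>p. f (mul (fst p) (snd p)))" using smooth_mul_comp[OF assms] smooth_fun_def by blast
    then show "Ck k (\<lambda>p. frechet_derivative (\<lambda>p. f (mul (fst p) (snd p))) (at p) (0, axis j 1))"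
      by simp
  qed
  moreover have "bounded_linear (\<lambda>x::(real,'n) vec. (x, 0::(real,'n) vec))"
    by (simp add: bounded_linear_Pair bounded_linear_ident)
  ultimately have "smooth_fun (\<lambda>x. H (x, 0))" by (rule smooth_comp_blin)
  then show ?thesis unfolding lvf_eq[OF assms] H_def .
qed

lemma lvf_add:
  assumes "smooth_fun f" "smooth_fun g"
  shows "lvf mul j (\<lambda>x. f x + g x) = (\<lambda>x. lvf mul j f x + lvf mul j g x)"
  unfolding lvf_def[of mul j "\<lambda>x. f x + g x"]
  using DERIV_imp_deriv[OF DERIV_add[OF lvf_deriv[OF assms(1)] lvf_deriv[OF assms(2)]]] by blast

lemma lvf_mult:
  assumes "smooth_fun f" "smooth_fun g"
  shows "lvf mul j (\<lambda>x. f x * g x) = (\<lambda>x. lvf mul j f x * g x + f x * lvf mul j g x)"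
proof
  fix x
  have "((\<lambda>t. f (mul x (t *\<^sub>R axis j 1)) * g (mul x (t *\<^sub>R axis j 1))) has_real_derivative
      f (mul x (0 *\<^sub>R axis j 1)) * lvf mul j g x + lvf mul j f x * g (mul x (0 *\<^sub>R axis j 1))) (at 0)"
    by (rule DERIV_mult'[OF lvf_deriv[OF assms(1)] lvf_deriv[OF assms(2)]])
  then show "lvf mul j (\<lambda>x. f x * g x) x = lvf mul j f x * g x + f x * lvf mul j g x"
  proof -
    have "mul x (0 *\<^sub>R axis j 1) = x" using unitm by simp
    then show ?thesis using DERIV_imp_deriv[OF \<open>(_ has_real_derivative _) _\<close>]
      unfolding lvf_def[of mul j "\<lambda>x. f x * g x"] by (simp add: add.commute)
  qed
qed

lemma lvf_cmult:
  assumes "smooth_fun f"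
  shows "lvf mul j (\<lambda>x. c * f x) = (\<lambda>x. c * lvf mul j f x)"
  unfolding lvf_def[of mul j "\<lambda>x. c * f x"]
  using DERIV_imp_deriv[OF DERIV_cmult[OF lvf_deriv[OF assms(1)]]] by blast

lemma lvf_sum:
  assumes "finite A" "\<And>i. i \<in> A \<Longrightarrow> smooth_fun (f i)"
  shows "lvf mul j (\<lambda>x. \<Sum>i\<in>A. f i x) = (\<lambda>x. \<Sum>i\<in>A. lvf mul j (f i) x)"
proof
  fix x
  have "((\<lambda>t. \<Sum>i\<in>A. f i (mul x (t *\<^sub>R axis j 1))) has_real_derivative (\<Sum>i\<in>A. lvf mul j (f i) x)) (at 0)"
    by (rule DERIV_sum) (rule lvf_deriv[OF assms(2)])
  then show "lvf mul j (\<lambda>x. \<Sum>i\<in>A. f i x) x = (\<Sum>i\<in>A. lvf mul j (f i) x)"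
    unfolding lvf_def[of mul j "\<lambda>x. \<Sum>i\<in>A. f i x"] by (rule DERIV_imp_deriv)
qed

lemma lvf_coord0: "lvf mul j (\<lambda>x. x $ k) 0 = (if j = k then 1 else 0)"
proof -
  have u: "mul 0 y = y" for y using unitm by blast
  have "(\<lambda>t. mul 0 (t *\<^sub>R axis j 1) $ k) = (\<lambda>t. t * (if j = k then 1 else 0))"
    unfolding u by (auto simp: axis_def)
  moreover have "((\<lambda>t::real. t * (if j = k then 1 else 0)) has_real_derivative (if j = k then 1 else 0)) (at 0)"
    using DERIV_cmult_Id[of "if j = k then 1 else (0::real)"] by (simp add: mult.commute)
  ultimately show ?thesis unfolding lvf_def by (simp add: DERIV_imp_deriv)
qed

end

definition dec :: "('n \<Rightarrow> nat) \<Rightarrow> 'n \<Rightarrow> ('n \<Rightarrow> nat)" where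
  "dec J k = J(k := J k - 1)"

definition ord1 :: "('n::finite \<Rightarrow> nat) \<Rightarrow> nat" where
  "ord1 J = (\<Sum>j\<in>UNIV. J j)"

lemma smooth_coord: "smooth_fun (\<lambda>x::(real,'n::finite) vec. x $ k)"
  unfolding smooth_fun_def by (auto intro!: Ck_linear)

lemma smooth_const: "smooth_fun (\<lambda>x. c)"
  unfolding smooth_fun_def by (auto intro!: Ck_const)

lemma smooth_add: "smooth_fun f \<Longrightarrow> smooth_fun g \<Longrightarrow> smooth_fun (\<lambda>x. f x + g x)"
  unfolding smooth_fun_def by (auto intro!: Ck_add)

lemma smooth_mult: "smooth_fun f \<Longrightarrow> smooth_fun g \<Longrightarrow> smooth_fun (\<lambda>x. f x * g x)"
  unfolding smooth_fun_def by (auto intro!: Ck_mult)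

lemma smooth_sum: "finite A \<Longrightarrow> (\<And>i. i \<in> A \<Longrightarrow> smooth_fun (f i)) \<Longrightarrow> smooth_fun (\<lambda>x. \<Sum>i\<in>A. f i x)"
  unfolding smooth_fun_def by (auto intro!: Ck_sum)

lemma smooth_eta: "smooth_fun (eta_mono J)"
  unfolding smooth_fun_def eta_mono_def
proof
  fix k
  show "Ck k (\<lambda>x::(real,'a) vec. \<Prod>j\<in>UNIV. x $ j ^ J j)"
    by (rule Ck_prod, simp, rule Ck_power, rule Ck_linear, rule bounded_linear_vec_nth)
qed

lemma eta_mono_0: "ord1 (J::'a::finite \<Rightarrow> nat) > 0 \<Longrightarrow> eta_mono J 0 = 0"
proof -
  assume "ord1 J > 0"
  then obtain k where "J k > 0" unfolding ord1_def by (metis gr0I sum.neutral)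
  then have "(0::(real,'a) vec) $ k ^ J k = 0" by simp
  then show ?thesis unfolding eta_mono_def by (meson finite UNIV_I prod_zero_iff)
qed

lemma eta_mono_ord0: "ord1 J = 0 \<Longrightarrow> eta_mono J x = 1"
  unfolding eta_mono_def ord1_def by simp

lemma ord1_dec: "J k > 0 \<Longrightarrow> ord1 (dec J k) = ord1 J - 1"
proof -
  assume a: "J k > 0"
  have "ord1 J = J k + (\<Sum>j\<in>UNIV-{k}. J j)" unfolding ord1_def by (rule sum.remove) auto
  moreover have "ord1 (dec J k) = dec J k k + (\<Sum>j\<in>UNIV-{k}. dec J k j)"
    unfolding ord1_def by (rule sum.remove) auto
  moreover have "(\<Sum>j\<in>UNIV-{k}. dec J k j) = (\<Sum>j\<in>UNIV-{k}. J j)"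
    by (rule sum.cong) (auto simp: dec_def)
  ultimately show ?thesis using a by (simp add: dec_def)
qed

lemma eta_dec_aux: "eta_mono (dec J k) x = x $ k ^ (J k - 1) * (\<Prod>j\<in>UNIV-{k}. x $ j ^ J j)"
proof -
  have "eta_mono (dec J k) x = x $ k ^ dec J k k * (\<Prod>j\<in>UNIV-{k}. x $ j ^ dec J k j)"
    unfolding eta_mono_def by (rule prod.remove) auto
  moreover have "(\<Prod>j\<in>UNIV-{k}. x $ j ^ dec J k j) = (\<Prod>j\<in>UNIV-{k}. x $ j ^ J j)"
    by (rule prod.cong) (auto simp: dec_def)
  ultimately show ?thesis by (simp add: dec_def)
qed

lemma eta_dec: "J k > 0 \<Longrightarrow> eta_mono J x = x $ k * eta_mono (dec J k) x"
proof -
  assume a: "J k > 0"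
  have "eta_mono J x = x $ k ^ J k * (\<Prod>j\<in>UNIV-{k}. x $ j ^ J j)"
    unfolding eta_mono_def by (rule prod.remove) auto
  moreover have "eta_mono (dec J k) x = x $ k ^ (J k - 1) * (\<Prod>j\<in>UNIV-{k}. x $ j ^ J j)"
    by (rule eta_dec_aux)
  moreover have "x $ k ^ J k = x $ k * x $ k ^ (J k - 1)" using a
    by (metis Suc_diff_1 power_Suc)
  ultimately show ?thesis by simp
qed

context
  fixes mul :: "(real, 'n::{finite,linorder}) vec \<Rightarrow> (real, 'n) vec \<Rightarrow> (real, 'n) vec"
    and s :: "'n \<Rightarrow> real"
  assumes smoothm: "\<forall>i. smooth_fun (\<lambda>p::(real, 'n) vec \<times> (real, 'n) vec. mul (fst p) (snd p) $ i)"
  and unitm: "\<forall>x. mul 0 x = x \<and> mul x 0 = x"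
  and dilm: "\<forall>r>0. \<forall>x y. mul (dil s r x) (dil s r y) = dil s r (mul x y)"
begin

lemmas lvf_add' = lvf_add[OF smoothm unitm]
lemmas lvf_mult' = lvf_mult[OF smoothm unitm]
lemmas lvf_cmult' = lvf_cmult[OF smoothm unitm]
lemmas lvf_sum' = lvf_sum[OF smoothm unitm]
lemmas lvf_smooth' = lvf_smooth[OF smoothm unitm]
lemmas lvf_deriv' = lvf_deriv[OF smoothm unitm]
lemmas lvf_coord0' = lvf_coord0[OF smoothm unitm]

lemma ops_smooth: "smooth_fun f \<Longrightarrow> smooth_fun (foldr (lvf mul) L f)"
  by (induction L) (auto intro: lvf_smooth')

lemma ops_cmult: "smooth_fun f \<Longrightarrow> foldr (lvf mul) L (\<lambda>x. c * f x) = (\<lambda>x. c * foldr (lvf mul) L f x)"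
proof (induction L)
  case Nil then show ?case by simp
next
  case (Cons l L)
  then show ?case using lvf_cmult'[OF ops_smooth[OF Cons.prems]] by simp
qed

lemma ops_add: "smooth_fun f \<Longrightarrow> smooth_fun g \<Longrightarrow>
   foldr (lvf mul) L (\<lambda>x. f x + g x) = (\<lambda>x. foldr (lvf mul) L f x + foldr (lvf mul) L g x)"
proof (induction L)
  case Nil then show ?case by simp
next
  case (Cons l L)
  then show ?case using lvf_add'[OF ops_smooth[OF Cons.prems(1)] ops_smooth[OF Cons.prems(2)]] by simp
qed

lemma ops_sum: "finite A \<Longrightarrow> (\<And>i. i \<in> A \<Longrightarrow> smooth_fun (f i)) \<Longrightarrow>
   foldr (lvf mul) L (\<lambda>x. \<Sum>i\<in>A. f i x) = (\<lambda>x. \<Sum>i\<in>A. foldr (lvf mul) L (f i) x)"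
proof (induction L)
  case Nil then show ?case by simp
next
  case (Cons l L)
  then show ?case using lvf_sum'[OF Cons.prems(1) ops_smooth[OF Cons.prems(2)]] by simp
qed

lemma lvf_eta: "lvf mul l (eta_mono J) x =
   (\<Sum>k\<in>UNIV. real (J k) * lvf mul l (\<lambda>x. x $ k) x * eta_mono (dec J k) x)"
proof -
  define \<phi> where "\<phi> k t = mul x (t *\<^sub>R axis l 1) $ k" for k t
  have d: "(\<phi> k has_real_derivative lvf mul l (\<lambda>x. x $ k) x) (at 0)" for k
    using lvf_deriv'[OF smooth_coord, of x l k] unfolding \<phi>_def by simp
  have \<phi>0: "\<phi> k 0 = x $ k" for k unfolding \<phi>_def using unitm by simp
  have dp: "((\<lambda>t. \<phi> k t ^ J k) has_real_derivative
      real (J k) * x $ k ^ (J k - 1) * lvf mul l (\<lambda>x. x $ k) x) (at 0)" for k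
    using DERIV_power[OF d[of k], of "J k"] \<phi>0 by (simp add: mult_ac)
  define c where "c k = real (J k) * x $ k ^ (J k - 1) * lvf mul l (\<lambda>x. x $ k) x" for k
  have dp': "((\<lambda>t. \<phi> k t ^ J k) has_derivative (\<lambda>y. c k * y)) (at 0)" for k
  proof -
    have "(\<lambda>y. c k * y) = (*) (c k)" by auto
    then show ?thesis using dp[of k] unfolding has_field_derivative_def c_def by simp
  qed
  have "((\<lambda>t. \<Prod>k\<in>UNIV. \<phi> k t ^ J k) has_derivative
     (\<lambda>y. \<Sum>k\<in>UNIV. (c k * y) * (\<Prod>j\<in>UNIV - {k}. \<phi> j 0 ^ J j))) (at 0)"
    by (rule has_derivative_prod[where f'="\<lambda>k y. c k * y"]) (rule dp')
  then have "((\<lambda>t. \<Prod>k\<in>UNIV. \<phi> k t ^ J k) has_derivative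
     (\<lambda>y. \<Sum>k\<in>UNIV. (real (J k) * x $ k ^ (J k - 1) * lvf mul l (\<lambda>x. x $ k) x * y) *
        (\<Prod>j\<in>UNIV - {k}. \<phi> j 0 ^ J j))) (at 0)" unfolding c_def .
  moreover have "(\<lambda>y. \<Sum>k\<in>UNIV. (real (J k) * x $ k ^ (J k - 1) * lvf mul l (\<lambda>x. x $ k) x * y) *
        (\<Prod>j\<in>UNIV - {k}. \<phi> j 0 ^ J j)) =
     (*) (\<Sum>k\<in>UNIV. real (J k) * lvf mul l (\<lambda>x. x $ k) x * eta_mono (dec J k) x)"
  proof (rule ext)
    fix y
    have key: "real (J k) * x $ k ^ (J k - 1) * (\<Prod>j\<in>UNIV - {k}. \<phi> j 0 ^ J j) =
          real (J k) * eta_mono (dec J k) x" for k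
    proof (cases "J k = 0")
      case True then show ?thesis by simp
    next
      case False
      have "eta_mono (dec J k) x = x $ k ^ (J k - 1) * (\<Prod>j\<in>UNIV-{k}. x $ j ^ J j)"
        by (rule eta_dec_aux)
      then show ?thesis using \<phi>0 by simp
    qed
    have tm: "(real (J k) * x $ k ^ (J k - 1) * lvf mul l (\<lambda>x. x $ k) x * y) *
        (\<Prod>j\<in>UNIV - {k}. \<phi> j 0 ^ J j) =
        (real (J k) * lvf mul l (\<lambda>x. x $ k) x * eta_mono (dec J k) x) * y" for k
    proof -
      have "(real (J k) * x $ k ^ (J k - 1) * lvf mul l (\<lambda>x. x $ k) x * y) *
        (\<Prod>j\<in>UNIV - {k}. \<phi> j 0 ^ J j) =
        (real (J k) * x $ k ^ (J k - 1) * (\<Prod>j\<in>UNIV - {k}. \<phi> j 0 ^ J j)) * (lvf mul l (\<lambda>x. x $ k) x * y)"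
        by (simp only: mult_ac)
      also have "\<dots> = (real (J k) * lvf mul l (\<lambda>x. x $ k) x * eta_mono (dec J k) x) * y"
        unfolding key by (simp only: mult_ac)
      finally show ?thesis .
    qed
    show "(\<Sum>k\<in>UNIV. (real (J k) * x $ k ^ (J k - 1) * lvf mul l (\<lambda>x. x $ k) x * y) *
        (\<Prod>j\<in>UNIV - {k}. \<phi> j 0 ^ J j)) =
        (\<Sum>k\<in>UNIV. real (J k) * lvf mul l (\<lambda>x. x $ k) x * eta_mono (dec J k) x) * y"
      unfolding sum_distrib_right by (rule sum.cong[OF refl tm])
  qed
  ultimately have "((\<lambda>t. \<Prod>k\<in>UNIV. \<phi> k t ^ J k) has_real_derivative
     (\<Sum>k\<in>UNIV. real (J k) * lvf mul l (\<lambda>x. x $ k) x * eta_mono (dec J k) x)) (at 0)"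
    unfolding has_field_derivative_def by simp
  then show ?thesis unfolding lvf_def eta_mono_def \<phi>_def
    by (rule DERIV_imp_deriv)
qed

end

definition cnt :: "'n list \<Rightarrow> ('n::finite \<Rightarrow> nat) \<Rightarrow> real" where
  "cnt L J = (if (\<forall>j. count_list L j = J j) then (\<Prod>j\<in>UNIV. fact (J j)) else 0)"

lemma count_list_snoc: "count_list (L @ [l]) j = count_list L j + (if j = l then 1 else 0)"
  by simp

lemma cnt_snoc: "real (J l) * cnt L (dec J l) = cnt (L @ [l]) J"
proof (cases "J l = 0")
  case True
  have "count_list (L @ [l]) l \<noteq> 0" by simp
  then have "\<not> (\<forall>j. count_list (L @ [l]) j = J j)" using True by metis
  then show ?thesis using True unfolding cnt_def by simp
next
  case False
  have iff: "(\<forall>j. count_list (L @ [l]) j = J j) \<longleftrightarrow> (\<forall>j. count_list L j = dec J l j)"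
  proof (intro iffI allI)
    fix j assume H: "\<forall>j. count_list (L @ [l]) j = J j"
    show "count_list L j = dec J l j" using H[rule_format, of j] False
      by (cases "j = l") (auto simp: dec_def)
  next
    fix j assume H: "\<forall>j. count_list L j = dec J l j"
    show "count_list (L @ [l]) j = J j" using H[rule_format, of j] False
      by (cases "j = l") (auto simp: dec_def)
  qed
  have p1: "(\<Prod>j\<in>UNIV. fact (J j) :: real) = fact (J l) * (\<Prod>j\<in>UNIV-{l}. fact (J j))"
    by (rule prod.remove) auto
  have p2: "(\<Prod>j\<in>UNIV. fact (dec J l j) :: real) = fact (dec J l l) * (\<Prod>j\<in>UNIV-{l}. fact (dec J l j))"
    by (rule prod.remove) auto
  have p3: "(\<Prod>j\<in>UNIV-{l}. fact (dec J l j) :: real) = (\<Prod>j\<in>UNIV-{l}. fact (J j))"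
    by (rule prod.cong) (auto simp: dec_def)
  have "fact (J l) = real (J l) * (fact (J l - 1) :: real)" using False fact_reduce by auto
  then have "(\<Prod>j\<in>UNIV. fact (J j) :: real) = real (J l) * (\<Prod>j\<in>UNIV. fact (dec J l j))"
    using p1 p2 p3 by (simp add: dec_def)
  then show ?thesis unfolding cnt_def iff by simp
qed

context
  fixes mul :: "(real, 'n::{finite,linorder}) vec \<Rightarrow> (real, 'n) vec \<Rightarrow> (real, 'n) vec"
    and s :: "'n \<Rightarrow> real"
  assumes smoothm: "\<forall>i. smooth_fun (\<lambda>p::(real, 'n) vec \<times> (real, 'n) vec. mul (fst p) (snd p) $ i)"
  and unitm: "\<forall>x. mul 0 x = x \<and> mul x 0 = x"
  and dilm: "\<forall>r>0. \<forall>x y. mul (dil s r x) (dil s r y) = dil s r (mul x y)"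
begin

lemmas lvf_mult'' = lvf_mult[OF smoothm unitm]
lemmas lvf_smooth'' = lvf_smooth[OF smoothm unitm]
lemmas lvf_cmult'' = lvf_cmult[OF smoothm unitm]
lemmas lvf_deriv'' = lvf_deriv[OF smoothm unitm]
lemmas lvf_coord0'' = lvf_coord0[OF smoothm unitm]
lemmas lvf_eta' = lvf_eta[OF smoothm unitm dilm]
lemmas ops_smooth' = ops_smooth[OF smoothm unitm dilm]
lemmas ops_cmult' = ops_cmult[OF smoothm unitm dilm]
lemmas ops_add' = ops_add[OF smoothm unitm dilm]
lemmas ops_sum' = ops_sum[OF smoothm unitm dilm]

lemma lvf_geta:
  assumes g: "smooth_fun g"
  shows "lvf mul l (\<lambda>x. g x * eta_mono J x) = (\<lambda>x. lvf mul l g x * eta_mono J x +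
     (\<Sum>k\<in>UNIV. real (J k) * ((g x * lvf mul l (\<lambda>x. x $ k) x) * eta_mono (dec J k) x)))"
proof
  fix x
  show "lvf mul l (\<lambda>x. g x * eta_mono J x) x = lvf mul l g x * eta_mono J x +
     (\<Sum>k\<in>UNIV. real (J k) * ((g x * lvf mul l (\<lambda>x. x $ k) x) * eta_mono (dec J k) x))"
  proof -
    have "g x * (\<Sum>k\<in>UNIV. real (J k) * lvf mul l (\<lambda>x. x $ k) x * eta_mono (dec J k) x) =
      (\<Sum>k\<in>UNIV. g x * (real (J k) * lvf mul l (\<lambda>x. x $ k) x * eta_mono (dec J k) x))"
      by (rule sum_distrib_left)
    also have "\<dots> = (\<Sum>k\<in>UNIV. real (J k) * ((g x * lvf mul l (\<lambda>x. x $ k) x) * eta_mono (dec J k) x))"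
      by (rule sum.cong) (simp_all only: mult_ac)
    finally show ?thesis unfolding lvf_mult''[OF g smooth_eta] lvf_eta' by simp
  qed
qed

lemma smooth_B: "smooth_fun g \<Longrightarrow> smooth_fun (\<lambda>x. (g x * lvf mul l (\<lambda>x. x $ k) x) * eta_mono (dec J k) x)"
  by (intro smooth_mult smooth_eta lvf_smooth'' smooth_coord)

lemma ops_split:
  assumes g: "smooth_fun g"
  shows "foldr (lvf mul) (L @ [l]) (\<lambda>x. g x * eta_mono J x) 0 =
    foldr (lvf mul) L (\<lambda>x. lvf mul l g x * eta_mono J x) 0 +
    (\<Sum>k\<in>UNIV. real (J k) * foldr (lvf mul) L (\<lambda>x. (g x * lvf mul l (\<lambda>x. x $ k) x) * eta_mono (dec J k) x) 0)"
proof -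
  have sA: "smooth_fun (\<lambda>x. lvf mul l g x * eta_mono J x)"
    by (intro smooth_mult smooth_eta lvf_smooth'' g)
  have sB: "smooth_fun (\<lambda>x. real (J k) * ((g x * lvf mul l (\<lambda>x. x $ k) x) * eta_mono (dec J k) x))" for k
    by (intro smooth_mult smooth_const smooth_B g)
  have "foldr (lvf mul) (L @ [l]) (\<lambda>x. g x * eta_mono J x) =
     foldr (lvf mul) L (lvf mul l (\<lambda>x. g x * eta_mono J x))" by simp
  also have "\<dots> = (\<lambda>x. foldr (lvf mul) L (\<lambda>x. lvf mul l g x * eta_mono J x) x +
     foldr (lvf mul) L (\<lambda>x. \<Sum>k\<in>UNIV. real (J k) * ((g x * lvf mul l (\<lambda>x. x $ k) x) * eta_mono (dec J k) x)) x)"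
    unfolding lvf_geta[OF g] by (rule ops_add'[OF sA smooth_sum[OF finite sB]])
  also have "foldr (lvf mul) L (\<lambda>x. \<Sum>k\<in>UNIV. real (J k) * ((g x * lvf mul l (\<lambda>x. x $ k) x) * eta_mono (dec J k) x)) =
     (\<lambda>x. \<Sum>k\<in>UNIV. foldr (lvf mul) L (\<lambda>x. real (J k) * ((g x * lvf mul l (\<lambda>x. x $ k) x) * eta_mono (dec J k) x)) x)"
    by (rule ops_sum'[OF finite sB])
  also have "\<dots> = (\<lambda>x. \<Sum>k\<in>UNIV. real (J k) * foldr (lvf mul) L (\<lambda>x. (g x * lvf mul l (\<lambda>x. x $ k) x) * eta_mono (dec J k) x) x)"
    by (simp add: ops_cmult'[OF smooth_B[OF g]])
  finally show ?thesis by simp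
qed

lemma ops_P: "smooth_fun g \<Longrightarrow> length L < ord1 J \<Longrightarrow> foldr (lvf mul) L (\<lambda>x. g x * eta_mono J x) 0 = 0"
proof (induction L arbitrary: g J rule: rev_induct)
  case Nil
  then show ?case using eta_mono_0[of J] by simp
next
  case (snoc l L)
  have A: "foldr (lvf mul) L (\<lambda>x. lvf mul l g x * eta_mono J x) 0 = 0"
    using snoc.IH[OF lvf_smooth''[OF snoc.prems(1)]] snoc.prems(2) by simp
  have B: "real (J k) * foldr (lvf mul) L (\<lambda>x. (g x * lvf mul l (\<lambda>x. x $ k) x) * eta_mono (dec J k) x) 0 = 0" for k
  proof (cases "J k = 0")
    case False
    then have "length L < ord1 (dec J k)" using ord1_dec[of J k] snoc.prems(2) by simp
    then show ?thesis
      using snoc.IH[OF smooth_mult[OF snoc.prems(1) lvf_smooth''[OF smooth_coord]]] by simp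
  qed simp
  show ?case unfolding ops_split[OF snoc.prems(1)] A B by simp
qed

lemma ops_G: "smooth_fun g \<Longrightarrow> length L = ord1 J \<Longrightarrow> foldr (lvf mul) L (\<lambda>x. g x * eta_mono J x) 0 = g 0 * cnt L J"
proof (induction L arbitrary: g J rule: rev_induct)
  case Nil
  then have "J = (\<lambda>_. 0)" unfolding ord1_def by auto
  then show ?case using Nil by (simp add: eta_mono_ord0 cnt_def)
next
  case (snoc l L)
  have A: "foldr (lvf mul) L (\<lambda>x. lvf mul l g x * eta_mono J x) 0 = 0"
    using ops_P[OF lvf_smooth''[OF snoc.prems(1)]] snoc.prems(2) by simp
  have B: "real (J k) * foldr (lvf mul) L (\<lambda>x. (g x * lvf mul l (\<lambda>x. x $ k) x) * eta_mono (dec J k) x) 0 =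
     (if k = l then real (J l) * g 0 * cnt L (dec J l) else 0)" for k
  proof (cases "J k = 0")
    case False
    then have "length L = ord1 (dec J k)" using ord1_dec[of J k] snoc.prems(2) by simp
    then show ?thesis
      using snoc.IH[OF smooth_mult[OF snoc.prems(1) lvf_smooth''[OF smooth_coord]]] lvf_coord0''[of l k]
      by (cases "k = l") simp_all
  qed auto
  have "foldr (lvf mul) (L @ [l]) (\<lambda>x. g x * eta_mono J x) 0 = real (J l) * g 0 * cnt L (dec J l)"
    unfolding ops_split[OF snoc.prems(1)] A B by simp
  also have "\<dots> = g 0 * cnt (L @ [l]) J" using cnt_snoc[of J l L] by simp
  finally show ?case .
qed

end

definition LI :: "('n::{finite,linorder} \<Rightarrow> nat) \<Rightarrow> 'n list" where
  "LI I = concat (map (\<lambda>j. replicate (I j) j) (sorted_list_of_set (UNIV::'n set)))"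

lemma count_list_replicate': "count_list (replicate n j) k = (if j = k then n else 0)"
  by (induction n) auto

lemma count_concat_rep: "distinct xs \<Longrightarrow>
  count_list (concat (map (\<lambda>j. replicate (I j) j) xs)) k = (if k \<in> set xs then I k else 0)"
  by (induction xs) (auto simp: count_list_replicate')

lemma length_concat_rep: "distinct xs \<Longrightarrow>
  length (concat (map (\<lambda>j. replicate (I j) j) xs)) = (\<Sum>j\<in>set xs. I j)"
  by (induction xs) auto

lemma sum_concat_rep: "distinct xs \<Longrightarrow>
  sum_list (map s (concat (map (\<lambda>j. replicate (I j) j) xs))) = (\<Sum>j\<in>set xs. real (I j) * s j)"
  by (induction xs) (auto simp: sum_list_replicate)

lemma count_LI: "count_list (LI I) k = I k"
  unfolding LI_def by (simp add: count_concat_rep)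

lemma length_LI: "length (LI I) = ord1 I"
  unfolding LI_def ord1_def by (simp add: length_concat_rep)

lemma sum_LI: "sum_list (map s (LI I)) = hdeg s I"
  unfolding LI_def hdeg_def by (simp add: sum_concat_rep mult.commute)

lemma funpow_foldr: "((h :: 'j \<Rightarrow> 'f \<Rightarrow> 'f) j ^^ n) g = foldr h (replicate n j) g"
proof (induction n)
  case 0 show ?case by simp
next
  case (Suc n)
  have "(h j ^^ Suc n) g = h j ((h j ^^ n) g)" by (simp only: funpow.simps o_apply)
  also have "\<dots> = h j (foldr h (replicate n j) g)" by (simp only: Suc.IH)
  also have "\<dots> = foldr h (replicate (Suc n) j) g" by (simp del: foldr_replicate)
  finally show ?case .
qed

lemma foldr_rep: "foldr (\<lambda>j g. (h j ^^ I j) g) xs f = foldr h (concat (map (\<lambda>j. replicate (I j) j) xs)) f"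
proof (induction xs)
  case Nil show ?case by simp
next
  case (Cons x xs)
  have "foldr (\<lambda>j g. (h j ^^ I j) g) (x # xs) f = (h x ^^ I x) (foldr (\<lambda>j g. (h j ^^ I j) g) xs f)"
    by simp
  also have "\<dots> = foldr h (replicate (I x) x) (foldr h (concat (map (\<lambda>j. replicate (I j) j) xs)) f)"
    unfolding Cons.IH by (rule funpow_foldr)
  also have "\<dots> = foldr h (concat (map (\<lambda>j. replicate (I j) j) (x # xs))) f"
    by (simp del: foldr_replicate)
  finally show ?case .
qed

lemma XI_LI: "XI mul I f = foldr (lvf mul) (LI I) f"
  unfolding XI_def LI_def by (rule foldr_rep)

lemma cnt_LI: "cnt (LI I) J = (if I = J then (\<Prod>j\<in>UNIV. fact (J j)) else 0)"
proof -
  have "(\<forall>j. I j = J j) \<longleftrightarrow> I = J" by auto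
  then show ?thesis unfolding cnt_def count_LI by presburger
qed

lemma dil_blin: "bounded_linear (dil s r)"
proof -
  have "linear (dil s r)"
    by (rule linearI) (simp_all add: dil_def vec_eq_iff ring_distribs mult.left_commute)
  then show ?thesis by (simp add: linear_conv_bounded_linear)
qed

lemma dil_0: "dil s r 0 = 0"
  by (simp add: dil_def vec_eq_iff)

lemma dil_axis: "dil s r (t *\<^sub>R axis l 1) = (r powr s l * t) *\<^sub>R axis l 1"
proof (subst vec_eq_iff, intro allI)
  fix i
  show "dil s r (t *\<^sub>R axis l 1) $ i = ((r powr s l * t) *\<^sub>R axis l 1) $ i"
    by (cases "i = l") (simp_all add: dil_def axis_def)
qed

lemma eta_dil: "r > 0 \<Longrightarrow> eta_mono J (dil s r x) = r powr hdeg s J * eta_mono J x"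
proof -
  assume r: "r > 0"
  have "eta_mono J (dil s r x) = (\<Prod>j\<in>UNIV. (r powr s j) ^ J j * x $ j ^ J j)"
    unfolding eta_mono_def dil_def by (simp add: power_mult_distrib)
  also have "\<dots> = (\<Prod>j\<in>UNIV. (r powr s j) ^ J j) * eta_mono J x"
    unfolding eta_mono_def by (rule prod.distrib)
  also have "(\<Prod>j\<in>UNIV. (r powr s j) ^ J j) = (\<Prod>j\<in>UNIV. r powr (real (J j) * s j))"
    by (rule prod.cong[OF refl]) (rule powr_power, use r in simp)
  also have "\<dots> = r powr (\<Sum>j\<in>UNIV. real (J j) * s j)"
    using r by (simp add: powr_sum)
  also have "(\<Sum>j\<in>UNIV. real (J j) * s j) = hdeg s J"
    unfolding hdeg_def by (rule sum.cong[OF refl]) (rule mult.commute)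
  finally show ?thesis .
qed

context
  fixes mul :: "(real, 'n::{finite,linorder}) vec \<Rightarrow> (real, 'n) vec \<Rightarrow> (real, 'n) vec"
    and s :: "'n \<Rightarrow> real"
  assumes smoothm: "\<forall>i. smooth_fun (\<lambda>p::(real, 'n) vec \<times> (real, 'n) vec. mul (fst p) (snd p) $ i)"
  and unitm: "\<forall>x. mul 0 x = x \<and> mul x 0 = x"
  and dilm: "\<forall>r>0. \<forall>x y. mul (dil s r x) (dil s r y) = dil s r (mul x y)"
begin

lemmas lvf_deriv3 = lvf_deriv[OF smoothm unitm]
lemmas lvf_cmult3 = lvf_cmult[OF smoothm unitm]
lemmas ops_smooth3 = ops_smooth[OF smoothm unitm dilm]
lemmas ops_cmult3 = ops_cmult[OF smoothm unitm dilm]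

lemma lvf_dil:
  assumes r: "r > 0" and f: "smooth_fun f"
  shows "lvf mul l (\<lambda>x. f (dil s r x)) x = r powr s l * lvf mul l f (dil s r x)"
proof -
  define c where "c = r powr s l"
  define \<phi> where "\<phi> u = f (mul (dil s r x) (u *\<^sub>R axis l 1))" for u
  have eq: "(\<lambda>t. f (dil s r (mul x (t *\<^sub>R axis l 1)))) = (\<lambda>t. \<phi> (c * t))"
  proof
    fix t
    have "dil s r (mul x (t *\<^sub>R axis l 1)) = mul (dil s r x) (dil s r (t *\<^sub>R axis l 1))"
      using dilm r by simp
    then show "f (dil s r (mul x (t *\<^sub>R axis l 1))) = \<phi> (c * t)"
      unfolding \<phi>_def c_def dil_axis by simp
  qed
  have d\<phi>: "(\<phi> has_real_derivative lvf mul l f (dil s r x)) (at ((\<lambda>t. c * t) 0))"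
    unfolding \<phi>_def using lvf_deriv3[OF f, of "dil s r x" l] by simp
  have dc: "((\<lambda>t. c * t) has_real_derivative c) (at 0)"
    using DERIV_cmult_Id[of c] by simp
  have "((\<lambda>t. \<phi> (c * t)) has_real_derivative lvf mul l f (dil s r x) * c) (at 0)"
    by (rule DERIV_chain'[OF dc d\<phi>])
  then have "deriv (\<lambda>t. \<phi> (c * t)) 0 = lvf mul l f (dil s r x) * c"
    by (rule DERIV_imp_deriv)
  moreover have "lvf mul l (\<lambda>x. f (dil s r x)) x = deriv (\<lambda>t. \<phi> (c * t)) 0"
    unfolding lvf_def[of mul l "\<lambda>x. f (dil s r x)"] eq ..
  ultimately show ?thesis unfolding c_def by (simp only: mult.commute)
qed

lemma ops_dil:
  assumes r: "r > 0"
  shows "smooth_fun f \<Longrightarrow> foldr (lvf mul) L (\<lambda>x. f (dil s r x)) =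
     (\<lambda>x. r powr (sum_list (map s L)) * foldr (lvf mul) L f (dil s r x))"
proof (induction L)
  case Nil then show ?case using r by simp
next
  case (Cons l L)
  have sm: "smooth_fun (\<lambda>x. foldr (lvf mul) L f (dil s r x))"
    by (rule smooth_comp_blin[OF ops_smooth3[OF Cons.prems] dil_blin])
  have "foldr (lvf mul) (l # L) (\<lambda>x. f (dil s r x)) =
     lvf mul l (\<lambda>x. r powr (sum_list (map s L)) * foldr (lvf mul) L f (dil s r x))"
    using Cons by simp
  also have "\<dots> = (\<lambda>x. r powr (sum_list (map s L)) * lvf mul l (\<lambda>x. foldr (lvf mul) L f (dil s r x)) x)"
    by (rule lvf_cmult3[OF sm])
  also have "\<dots> = (\<lambda>x. r powr (sum_list (map s (l # L))) * foldr (lvf mul) (l # L) f (dil s r x))"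
    using lvf_dil[OF r ops_smooth3[OF Cons.prems]] by (simp add: powr_add mult_ac)
  finally show ?case .
qed

lemma M_hom:
  assumes "sum_list (map s L) \<noteq> hdeg s J"
  shows "foldr (lvf mul) L (eta_mono J) 0 = 0"
proof -
  define m where "m = foldr (lvf mul) L (eta_mono J) 0"
  have two: "(2::real) > 0" by simp
  have h1: "foldr (lvf mul) L (\<lambda>x. eta_mono J (dil s 2 x)) =
     (\<lambda>x. 2 powr (sum_list (map s L)) * foldr (lvf mul) L (eta_mono J) (dil s 2 x))"
    by (rule ops_dil[OF two smooth_eta])
  have h2: "(\<lambda>x. eta_mono J (dil s 2 x)) = (\<lambda>x. 2 powr hdeg s J * eta_mono J x)"
    by (rule ext) (rule eta_dil[OF two])
  have h3: "foldr (lvf mul) L (\<lambda>x. 2 powr hdeg s J * eta_mono J x) = (\<lambda>x. 2 powr hdeg s J * foldr (lvf mul) L (eta_mono J) x)"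
    by (rule ops_cmult3[OF smooth_eta])
  have "2 powr hdeg s J * m = 2 powr (sum_list (map s L)) * m"
    using fun_cong[OF h1, of 0] unfolding h2 h3 dil_0 m_def .
  then have "(2 powr hdeg s J - 2 powr (sum_list (map s L))) * m = 0"
    by (simp only: left_diff_distrib)
  moreover have "(2::real) powr hdeg s J \<noteq> 2 powr (sum_list (map s L))"
    using assms powr_inj[of 2 "hdeg s J" "sum_list (map s L)"] by simp
  ultimately show ?thesis unfolding m_def by simp
qed

end

definition eI :: "('n \<Rightarrow> nat) \<Rightarrow> ('n \<Rightarrow> nat) \<Rightarrow> real" where
  "eI J = (\<lambda>I. if I = J then 1 else 0)"

lemma grade_space_eI: "hdeg s J = a \<Longrightarrow> eI J \<in> grade_space s a"
  unfolding grade_space_def eI_def by auto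

lemma norm_zero: "norm_on (grade_space s a) N \<Longrightarrow> N (\<lambda>_. 0) = 0"
proof -
  assume h: "norm_on (grade_space s a) N"
  have z: "(\<lambda>_. 0) \<in> grade_space s a" unfolding grade_space_def by simp
  have "N (\<lambda>I. 0 * c I) = \<bar>0\<bar> * N c" if "c \<in> grade_space s a" for c
    using h that unfolding norm_on_def by blast
  from this[OF z] show ?thesis by simp
qed

lemma norm_nonneg_on: "norm_on V N \<Longrightarrow> c \<in> V \<Longrightarrow> N c \<ge> 0"
  unfolding norm_on_def by blast

lemma norm_sum_bound:
  assumes N: "norm_on (grade_space s a) N" and A: "finite A"
  shows "(\<forall>J\<in>A. hdeg s J = a) \<Longrightarrow> N (\<lambda>I. \<Sum>J\<in>A. d J * eI J I) \<le> (\<Sum>J\<in>A. \<bar>d J\<bar> * N (eI J)) \<and>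
     (\<lambda>I. \<Sum>J\<in>A. d J * eI J I) \<in> grade_space s a"
  using A
proof (induction A rule: finite_induct)
  case empty
  then show ?case using norm_zero[OF N] by (simp add: grade_space_def)
next
  case (insert x A)
  have ex: "eI x \<in> grade_space s a" using insert.prems grade_space_eI by auto
  define u where "u = (\<lambda>I. d x * eI x I)"
  define w where "w = (\<lambda>I. \<Sum>J\<in>A. d J * eI J I)"
  have IH: "N w \<le> (\<Sum>J\<in>A. \<bar>d J\<bar> * N (eI J))" "w \<in> grade_space s a"
    using insert unfolding w_def by auto
  have u_in: "u \<in> grade_space s a" using ex unfolding u_def grade_space_def by auto
  have Nu: "N u = \<bar>d x\<bar> * N (eI x)" using N ex unfolding norm_on_def u_def by blast
  have tri: "N (\<lambda>I. u I + w I) \<le> N u + N w" using N u_in IH(2) unfolding norm_on_def by blast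
  have eq: "(\<lambda>I. \<Sum>J\<in>insert x A. d J * eI J I) = (\<lambda>I. u I + w I)"
    using insert.hyps unfolding u_def w_def by simp
  have mem: "(\<lambda>I. u I + w I) \<in> grade_space s a"
    using u_in IH(2) unfolding grade_space_def by auto
  show ?case unfolding eq using tri Nu IH(1) mem insert.hyps by simp
qed

lemma finite_hdeg_lt:
  assumes w: "\<forall>j. s j \<ge> 1"
  shows "finite {I::'n::finite \<Rightarrow> nat. hdeg s I < \<delta>}"
proof -
  have ord_le: "real (ord1 I) \<le> hdeg s I" for I
  proof -
    have "real (ord1 I) = (\<Sum>j\<in>UNIV. real (I j))" unfolding ord1_def by simp
    also have "\<dots> \<le> (\<Sum>j\<in>UNIV. s j * real (I j))"
    proof (rule sum_mono)
      fix j
      show "real (I j) \<le> s j * real (I j)"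
        using mult_right_mono[of 1 "s j" "real (I j)"] w by simp
    qed
    finally show ?thesis unfolding hdeg_def .
  qed
  define D where "D = nat \<lceil>\<delta>\<rceil>"
  have sub: "{I::'n \<Rightarrow> nat. hdeg s I < \<delta>} \<subseteq> Pi\<^sub>E UNIV (\<lambda>_. {..D})"
  proof
    fix I :: "'n \<Rightarrow> nat" assume "I \<in> {I. hdeg s I < \<delta>}"
    then have h: "hdeg s I < \<delta>" by simp
    have "I j \<le> D" for j
    proof -
      have "I j \<le> ord1 I" unfolding ord1_def by (rule member_le_sum) auto
      then have "real (I j) < \<delta>" using ord_le[of I] h by linarith
      then show ?thesis unfolding D_def by linarith
    qed
    then show "I \<in> Pi\<^sub>E UNIV (\<lambda>_. {..D})" by (simp add: PiE_UNIV_domain)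
  qed
  show ?thesis by (rule finite_subset[OF sub]) (rule finite_PiE, auto)
qed

lemma ord_le_hdeg: "\<forall>j. s j \<ge> 1 \<Longrightarrow> real (ord1 I) \<le> hdeg s I"
proof -
  assume w: "\<forall>j. s j \<ge> 1"
  have "real (ord1 I) = (\<Sum>j\<in>UNIV. real (I j))" unfolding ord1_def by simp
  also have "\<dots> \<le> (\<Sum>j\<in>UNIV. s j * real (I j))"
  proof (rule sum_mono)
    fix j
    show "real (I j) \<le> s j * real (I j)"
      using mult_right_mono[of 1 "s j" "real (I j)"] w by simp
  qed
  finally show ?thesis unfolding hdeg_def .
qed


theorem lemma3p9:
  fixes mul :: "(real, 'n::{finite,linorder}) vec \<Rightarrow> (real, 'n) vec \<Rightarrow> (real, 'n) vec"
    and s :: "'n \<Rightarrow> real"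
    and nrm :: "real \<Rightarrow> ((('n \<Rightarrow> nat) \<Rightarrow> real) \<Rightarrow> real)"
    and \<delta> :: real
  assumes smooth: "\<forall>i. smooth_fun (\<lambda>p::(real, 'n) vec \<times> (real, 'n) vec. mul (fst p) (snd p) $ i)"
    and assoc: "\<forall>x y z. mul (mul x y) z = mul x (mul y z)"
    and unit: "\<forall>x. mul 0 x = x \<and> mul x 0 = x"
    and inverse: "\<forall>x. \<exists>y. mul x y = 0 \<and> mul y x = 0"
    and exp_coords: "\<forall>x u v. mul (u *\<^sub>R x) (v *\<^sub>R x) = (u + v) *\<^sub>R x"
    and weights: "\<forall>j. s j \<ge> 1" "\<exists>j. s j = 1"
    and dilation_aut: "\<forall>r>0. \<forall>x y. mul (dil s r x) (dil s r y) = dil s r (mul x y)"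
    and norms: "\<forall>a. norm_on (grade_space s a) (nrm a)"
    and \<delta>_pos: "\<delta> > 0"
  shows "\<exists>C. \<forall>(c :: ('n \<Rightarrow> nat) \<Rightarrow> real) (\<epsilon>::real).
           (\<forall>I. c I \<noteq> 0 \<longrightarrow> hdeg s I < \<delta>) \<and> 0 \<le> \<epsilon> \<and> \<epsilon> \<le> 1 \<and>
           (\<forall>I. hdeg s I < \<delta> \<longrightarrow> \<bar>XI mul I (Pi_e c) 0\<bar> \<le> \<epsilon> powr (\<delta> - hdeg s I))
           \<longrightarrow> (\<forall>a\<le>\<delta>. nrm a (hcomp s c a) \<le> C * \<epsilon> powr (\<delta> - a))"
proof -
  define S where "S = {I::'n \<Rightarrow> nat. hdeg s I < \<delta>}"
  have finS: "finite S" unfolding S_def by (rule finite_hdeg_lt[OF weights(1)])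
  define M where "M I J = XI mul I (eta_mono J) 0" for I J
  define F where "F J = (\<Prod>j\<in>UNIV. fact (J j) :: real)" for J :: "'n \<Rightarrow> nat"
  have F1: "F J \<ge> 1" for J unfolding F_def by (rule prod_ge_1) auto
  have M1: "M I J = 0" if "hdeg s I \<noteq> hdeg s J" for I J
    unfolding M_def XI_LI using M_hom[OF smooth unit dilation_aut, of "LI I" J] sum_LI[of s I] that by simp
  have M2: "M I J = 0" if "ord1 I < ord1 J" for I J
  proof -
    have "foldr (lvf mul) (LI I) (\<lambda>x. 1 * eta_mono J x) 0 = 0"
      by (rule ops_P[OF smooth unit dilation_aut smooth_const]) (simp add: length_LI that)
    then show ?thesis unfolding M_def XI_LI by simp
  qed
  have M3: "M I J = (if I = J then F J else 0)" if "ord1 I = ord1 J" for I J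
  proof -
    have "foldr (lvf mul) (LI I) (\<lambda>x. 1 * eta_mono J x) 0 = 1 * cnt (LI I) J"
      by (rule ops_G[OF smooth unit dilation_aut smooth_const]) (simp add: length_LI that)
    then show ?thesis unfolding M_def XI_LI cnt_LI F_def by simp
  qed
  define B where "B = (\<Sum>I\<in>S. \<Sum>J\<in>S. \<bar>M I J\<bar>)"
  have B0: "B \<ge> 0" unfolding B_def by (intro sum_nonneg) auto
  have BI: "(\<Sum>J\<in>S-{I}. \<bar>M I J\<bar>) \<le> B" if "I \<in> S" for I
  proof -
    have "(\<Sum>J\<in>S-{I}. \<bar>M I J\<bar>) \<le> (\<Sum>J\<in>S. \<bar>M I J\<bar>)"
      by (rule sum_mono2[OF finS]) auto
    also have "\<dots> \<le> B" unfolding B_def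
      by (rule member_le_sum[OF that _ finS, of "\<lambda>I. \<Sum>J\<in>S. \<bar>M I J\<bar>"]) (intro sum_nonneg, auto)
    finally show ?thesis .
  qed
  define K where "K = (\<Sum>I\<in>S. (1 + B) ^ ord1 I)"
  have K0: "K \<ge> 0" unfolding K_def using B0 by (intro sum_nonneg) auto
  have KI: "(1 + B) ^ ord1 I \<le> K" if "I \<in> S" for I
    unfolding K_def by (rule member_le_sum[OF that _ finS]) (use B0 in auto)
  define C where "C = K * (\<Sum>J\<in>S. nrm (hdeg s J) (eI J))"
  have main: "nrm a (hcomp s c a) \<le> C * \<epsilon> powr (\<delta> - a)"
    if H1: "\<forall>I. c I \<noteq> 0 \<longrightarrow> hdeg s I < \<delta>" and e0: "0 \<le> \<epsilon>"
      and H2: "\<forall>I. hdeg s I < \<delta> \<longrightarrow> \<bar>XI mul I (Pi_e c) 0\<bar> \<le> \<epsilon> powr (\<delta> - hdeg s I)"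
    for c \<epsilon> a
  proof -
    have supp: "{I. c I \<noteq> 0} \<subseteq> S" using H1 unfolding S_def by auto
    have Pe: "Pi_e c = (\<lambda>x. \<Sum>J\<in>S. c J * eta_mono J x)"
    proof
      fix x
      show "Pi_e c x = (\<Sum>J\<in>S. c J * eta_mono J x)"
        unfolding Pi_e_def by (rule sum.mono_neutral_left[OF finS supp]) auto
    qed
    have v: "XI mul I (Pi_e c) 0 = (\<Sum>J\<in>S. c J * M I J)" for I
    proof -
      have sm: "smooth_fun (\<lambda>x. c J * eta_mono J x)" for J
        by (intro smooth_mult smooth_const smooth_eta)
      have "XI mul I (Pi_e c) 0 = (\<Sum>J\<in>S. foldr (lvf mul) (LI I) (\<lambda>x. c J * eta_mono J x) 0)"
        unfolding XI_LI Pe ops_sum[OF smooth unit dilation_aut finS sm] ..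
      also have "\<dots> = (\<Sum>J\<in>S. c J * M I J)"
        unfolding M_def XI_LI ops_cmult[OF smooth unit dilation_aut smooth_eta] ..
      finally show ?thesis .
    qed
    have v2: "XI mul I (Pi_e c) 0 = F I * c I + (\<Sum>J\<in>S-{I}. c J * M I J)" if "I \<in> S" for I
      unfolding v using sum.remove[OF finS that, of "\<lambda>J. c J * M I J"] M3[of I I] by (simp add: mult.commute)
    have claim: "\<forall>I\<in>S. ord1 I = n \<longrightarrow> \<bar>c I\<bar> \<le> (1 + B) ^ n * \<epsilon> powr (\<delta> - hdeg s I)" for n
    proof (induction n rule: less_induct)
      case (less n)
      show ?case
      proof (intro ballI impI)
        fix I assume IS: "I \<in> S" and oI: "ord1 I = n"
        define E where "E = \<epsilon> powr (\<delta> - hdeg s I)"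
        have E0: "E \<ge> 0" unfolding E_def by simp
        have vI: "\<bar>XI mul I (Pi_e c) 0\<bar> \<le> E" using H2 IS unfolding S_def E_def by simp
        have tb: "\<bar>c J * M I J\<bar> \<le> (1 + B) ^ (n - 1) * E * \<bar>M I J\<bar> \<and> (n = 0 \<longrightarrow> c J * M I J = 0)"
          if JS: "J \<in> S - {I}" for J
        proof (cases "hdeg s J = hdeg s I \<and> ord1 J < ord1 I")
          case False
          have "M I J = 0"
          proof (cases "hdeg s J = hdeg s I")
            case True
            with False have "ord1 I \<le> ord1 J" by simp
            then show ?thesis
            proof (cases "ord1 I = ord1 J")
              case True then show ?thesis using M3[OF True] JS by auto
            next
              case False then show ?thesis using M2 \<open>ord1 I \<le> ord1 J\<close> by simp
            qed
          next
            case False then show ?thesis using M1 by metis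
          qed
          then show ?thesis using B0 E0 by simp
        next
          case True
          have JS': "J \<in> S" using JS by simp
          have "\<bar>c J\<bar> \<le> (1 + B) ^ ord1 J * \<epsilon> powr (\<delta> - hdeg s J)"
            using less.IH[of "ord1 J"] True oI JS' by blast
          then have "\<bar>c J\<bar> \<le> (1 + B) ^ ord1 J * E"
            using True unfolding E_def by simp
          also have "(1 + B) ^ ord1 J \<le> (1 + B) ^ (n - 1)"
            by (rule power_increasing) (use True oI B0 in auto)
          then have "(1 + B) ^ ord1 J * E \<le> (1 + B) ^ (n - 1) * E"
            by (rule mult_right_mono) (rule E0)
          finally have "\<bar>c J\<bar> \<le> (1 + B) ^ (n - 1) * E" .
          then have "\<bar>c J\<bar> * \<bar>M I J\<bar> \<le> (1 + B) ^ (n - 1) * E * \<bar>M I J\<bar>"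
            by (rule mult_right_mono) simp
          then show ?thesis using True oI by (simp add: abs_mult)
        qed
        have sb: "\<bar>\<Sum>J\<in>S-{I}. c J * M I J\<bar> \<le> (1 + B) ^ (n - 1) * E * B"
        proof -
          have "\<bar>\<Sum>J\<in>S-{I}. c J * M I J\<bar> \<le> (\<Sum>J\<in>S-{I}. \<bar>c J * M I J\<bar>)"
            by (rule sum_abs)
          also have "\<dots> \<le> (\<Sum>J\<in>S-{I}. (1 + B) ^ (n - 1) * E * \<bar>M I J\<bar>)"
            by (rule sum_mono) (use tb in blast)
          also have "\<dots> = (1 + B) ^ (n - 1) * E * (\<Sum>J\<in>S-{I}. \<bar>M I J\<bar>)"
            by (simp add: sum_distrib_left)
          also have "\<dots> \<le> (1 + B) ^ (n - 1) * E * B"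
            by (rule mult_left_mono[OF BI[OF IS]]) (use B0 E0 in simp)
          finally show ?thesis .
        qed
        have cF: "\<bar>c I\<bar> \<le> \<bar>XI mul I (Pi_e c) 0\<bar> + \<bar>\<Sum>J\<in>S-{I}. c J * M I J\<bar>"
        proof -
          have "\<bar>c I\<bar> \<le> F I * \<bar>c I\<bar>" using F1[of I] mult_right_mono[of 1 "F I" "\<bar>c I\<bar>"] by simp
          also have "\<dots> = \<bar>F I * c I\<bar>" using F1[of I] by (simp add: abs_mult)
          also have "F I * c I = XI mul I (Pi_e c) 0 - (\<Sum>J\<in>S-{I}. c J * M I J)" using v2[OF IS] by simp
          finally show ?thesis by linarith
        qed
        show "\<bar>c I\<bar> \<le> (1 + B) ^ n * \<epsilon> powr (\<delta> - hdeg s I)"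
        proof (cases "n = 0")
          case True
          have "(\<Sum>J\<in>S-{I}. c J * M I J) = 0" using tb True by (intro sum.neutral) blast
          then show ?thesis using cF vI True unfolding E_def by simp
        next
          case False
          have "(1 + B) ^ n = (1 + B) ^ (n - 1) * (1 + B)"
            using False by (metis Suc_pred' bot_nat_0.not_eq_extremum mult.commute power_Suc)
          moreover have "(1 + B) ^ (n - 1) \<ge> 1" using B0 by (simp add: one_le_power)
          ultimately have "1 + (1 + B) ^ (n - 1) * B \<le> (1 + B) ^ n" by (simp add: algebra_simps)
          then have "(1 + (1 + B) ^ (n - 1) * B) * E \<le> (1 + B) ^ n * E"
            by (rule mult_right_mono) (rule E0)
          then have "E + (1 + B) ^ (n - 1) * E * B \<le> (1 + B) ^ n * E"
            by (simp add: algebra_simps)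
          then show ?thesis using cF vI sb unfolding E_def by linarith
        qed
      qed
    qed
    have cb: "\<bar>c I\<bar> \<le> K * \<epsilon> powr (\<delta> - hdeg s I)" if "I \<in> S" for I
    proof -
      have "\<bar>c I\<bar> \<le> (1 + B) ^ ord1 I * \<epsilon> powr (\<delta> - hdeg s I)" using claim that by blast
      also have "\<dots> \<le> K * \<epsilon> powr (\<delta> - hdeg s I)" by (rule mult_right_mono[OF KI[OF that]]) simp
      finally show ?thesis .
    qed
    define Sa where "Sa = {J \<in> S. hdeg s J = a}"
    have finSa: "finite Sa" unfolding Sa_def using finS by simp
    have hc: "hcomp s c a = (\<lambda>I. \<Sum>J\<in>Sa. c J * eI J I)"
    proof
      fix I
      have "(\<Sum>J\<in>Sa. c J * eI J I) = (\<Sum>J\<in>Sa. if J = I then c I else 0)"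
        by (rule sum.cong) (auto simp: eI_def)
      also have "\<dots> = (if I \<in> Sa then c I else 0)" using finSa by simp
      finally show "hcomp s c a I = (\<Sum>J\<in>Sa. c J * eI J I)"
        unfolding hcomp_def Sa_def using supp by auto
    qed
    have nS: "nrm (hdeg s J) (eI J) \<ge> 0" for J
      using norm_nonneg_on[OF norms[rule_format] grade_space_eI[OF refl]] .
    have "nrm a (hcomp s c a) \<le> (\<Sum>J\<in>Sa. \<bar>c J\<bar> * nrm a (eI J))"
      unfolding hc using norm_sum_bound[OF norms[rule_format] finSa] unfolding Sa_def by auto
    also have "\<dots> \<le> (\<Sum>J\<in>Sa. K * \<epsilon> powr (\<delta> - a) * nrm (hdeg s J) (eI J))"
    proof (rule sum_mono)
      fix J assume "J \<in> Sa"
      then have J: "J \<in> S" "hdeg s J = a" unfolding Sa_def by auto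
      show "\<bar>c J\<bar> * nrm a (eI J) \<le> K * \<epsilon> powr (\<delta> - a) * nrm (hdeg s J) (eI J)"
        using mult_right_mono[OF cb[OF J(1)] nS[of J]] J(2) by simp
    qed
    also have "\<dots> = K * \<epsilon> powr (\<delta> - a) * (\<Sum>J\<in>Sa. nrm (hdeg s J) (eI J))"
      by (simp add: sum_distrib_left)
    also have "\<dots> \<le> K * \<epsilon> powr (\<delta> - a) * (\<Sum>J\<in>S. nrm (hdeg s J) (eI J))"
      by (rule mult_left_mono, rule sum_mono2[OF finS], auto simp: Sa_def nS K0)
    also have "\<dots> = C * \<epsilon> powr (\<delta> - a)" unfolding C_def by simp
    finally show ?thesis .
  qed
  show ?thesis using main by blast
qed

end
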